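(* For any cardinality $\kappa$, $\Delta_{c_0^+(\kappa)}^{(c)}(R)=R$ for all $R\in[0,\infty)$.
   Context: For a cardinal $\kappa$, $c_0(\kappa)$ is the space of real families $(x_\xi)_{\xi<\kappa}$ such that $\{\xi: |x_\xi|>\eta\}$ is finite for every $\eta>0$, with the sup norm, and $c_0^+(\kappa)=\{x\in c_0(\kappa): x_\xi\geq0\ \forall\xi\}$ with the inherited metric. For a metric space $X$ and a cover $\mathcal{U}$ of $X$: $\mathrm{diam}(\mathcal{U})=\sup_{U\in\mathcal{U}}\mathrm{diam}(U)$; $\mathcal{L}(\mathcal{U})=\sup\{d\in[0,\infty): \text{every } E\subseteq X \text{ with } \mathrm{diam}(E)<d \text{ is contained in some } U\in\mathcal{U}\}$; $\mathcal{U}$ is point-finite if each point lies in only finitely many members. $\Delta_X^{(c)}(R)=\inf\{\mathrm{diam}(\mathcal{U}): \mathcal{U} \text{ a point-finite cover of } X,\ \mathcal{L}(\mathcal{U})\geq R\}$. *)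

theory Defs
  imports "HOL-Analysis.Analysis"
begin

text \<open>Generic notions for a metric space given by a carrier X and distance d.
Diameters take values in [0,\<infinity>] (type ennreal); the empty set has diameter 0.\<close>

definition set_diam :: "('a \<Rightarrow> 'a \<Rightarrow> real) \<Rightarrow> 'a set \<Rightarrow> ennreal" where
  "set_diam d E = (SUP p\<in>E \<times> E. ennreal (d (fst p) (snd p)))"

definition cover_diam :: "('a \<Rightarrow> 'a \<Rightarrow> real) \<Rightarrow> 'a set set \<Rightarrow> ennreal" where
  "cover_diam d \<U> = (SUP U\<in>\<U>. set_diam d U)"

definition lebesgue_num :: "'a set \<Rightarrow> ('a \<Rightarrow> 'a \<Rightarrow> real) \<Rightarrow> 'a set set \<Rightarrow> ennreal" where
  "lebesgue_num X d \<U> =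
     Sup {ennreal r | r. r \<ge> 0 \<and>
            (\<forall>E. E \<subseteq> X \<longrightarrow> set_diam d E < ennreal r \<longrightarrow> (\<exists>U\<in>\<U>. E \<subseteq> U))}"

definition is_cover :: "'a set \<Rightarrow> 'a set set \<Rightarrow> bool" where
  "is_cover X \<U> \<longleftrightarrow> (\<forall>U\<in>\<U>. U \<subseteq> X) \<and> \<Union>\<U> = X"

definition point_finite :: "'a set \<Rightarrow> 'a set set \<Rightarrow> bool" where
  "point_finite X \<U> \<longleftrightarrow> (\<forall>x\<in>X. finite {U\<in>\<U>. x \<in> U})"

text \<open>\<Delta>^(c)_X(R); the infimum of the empty set is \<infinity>.\<close>
definition Delta_c :: "'a set \<Rightarrow> ('a \<Rightarrow> 'a \<Rightarrow> real) \<Rightarrow> real \<Rightarrow> ennreal" where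
  "Delta_c X d R = Inf {cover_diam d \<U> | \<U>. is_cover X \<U> \<and> point_finite X \<U>
                                         \<and> lebesgue_num X d \<U> \<ge> ennreal R}"

text \<open>c_0^+(\<kappa>), with \<kappa> the cardinality of the index type 'k, and the sup metric.\<close>
definition c0_plus :: "('k \<Rightarrow> real) set" where
  "c0_plus = {x. (\<forall>\<xi>. x \<xi> \<ge> 0) \<and> (\<forall>\<eta>>0. finite {\<xi>. \<bar>x \<xi>\<bar> > \<eta>})}"

definition sup_dist :: "('k \<Rightarrow> real) \<Rightarrow> ('k \<Rightarrow> real) \<Rightarrow> real" where
  "sup_dist x y = (SUP \<xi>. \<bar>x \<xi> - y \<xi>\<bar>)"

end

theory Submission
  imports Defs
begin

lemma c0_bdd:
  assumes "x \<in> c0_plus"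
  shows "\<exists>B. \<forall>\<xi>. 0 \<le> x \<xi> \<and> x \<xi> \<le> B"
proof -
  define S where "S = {\<xi>. \<bar>x \<xi>\<bar> > 1}"
  have fin: "finite S" using assms unfolding c0_plus_def S_def by auto
  have nn: "\<forall>\<xi>. 0 \<le> x \<xi>" using assms unfolding c0_plus_def by auto
  have "x \<xi> \<le> 1 + (\<Sum>\<zeta>\<in>S. x \<zeta>)" for \<xi>
  proof (cases "\<xi> \<in> S")
    case True
    then have "x \<xi> \<le> (\<Sum>\<zeta>\<in>S. x \<zeta>)" using fin nn by (intro member_le_sum) auto
    then show ?thesis by simp
  next
    case False
    then have "x \<xi> \<le> 1" using nn unfolding S_def by auto
    moreover have "0 \<le> (\<Sum>\<zeta>\<in>S. x \<zeta>)" using nn by (simp add: sum_nonneg)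
    ultimately show ?thesis by simp
  qed
  then show ?thesis using nn by blast
qed

lemma sd_le:
  assumes "\<And>\<xi>. \<bar>x \<xi> - y \<xi>\<bar> \<le> c"
  shows "sup_dist x y \<le> c"
  unfolding sup_dist_def using assms by (intro cSUP_least) auto

lemma sd_ge:
  assumes "x \<in> c0_plus" "y \<in> c0_plus"
  shows "\<bar>x \<xi> - y \<xi>\<bar> \<le> sup_dist x y"
proof -
  obtain B1 where B1: "\<forall>\<xi>. 0 \<le> x \<xi> \<and> x \<xi> \<le> B1" using c0_bdd[OF assms(1)] by blast
  obtain B2 where B2: "\<forall>\<xi>. 0 \<le> y \<xi> \<and> y \<xi> \<le> B2" using c0_bdd[OF assms(2)] by blast
  have "bdd_above (range (\<lambda>\<xi>. \<bar>x \<xi> - y \<xi>\<bar>))"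
  proof (rule bdd_aboveI)
    fix z assume "z \<in> range (\<lambda>\<xi>. \<bar>x \<xi> - y \<xi>\<bar>)"
    then obtain \<zeta> where "z = \<bar>x \<zeta> - y \<zeta>\<bar>" by auto
    then show "z \<le> B1 + B2" using B1 B2 by (smt (verit))
  qed
  then show ?thesis unfolding sup_dist_def by (intro cSUP_upper) auto
qed

lemma diam_le:
  assumes "\<And>x y. x \<in> E \<Longrightarrow> y \<in> E \<Longrightarrow> ennreal (d x y) \<le> c"
  shows "set_diam d E \<le> c"
  unfolding set_diam_def using assms by (intro SUP_least) auto

lemma diam_ge:
  assumes "x \<in> E" "y \<in> E"
  shows "ennreal (d x y) \<le> set_diam d E"
proof -
  have "(x, y) \<in> E \<times> E" using assms by auto
  then show ?thesis unfolding set_diam_def by (metis (no_types, lifting) SUP_upper fst_conv snd_conv)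
qed

lemma lower:
  fixes R :: real
  assumes R: "R \<ge> 0"
    and cov: "lebesgue_num (c0_plus :: ('k \<Rightarrow> real) set) sup_dist \<U> \<ge> ennreal R"
  shows "ennreal R \<le> cover_diam sup_dist \<U>"
proof -
  have key: "ennreal t \<le> cover_diam sup_dist \<U>" if t: "0 \<le> t" "t < R" for t
  proof -
    have "ennreal t < ennreal R" using t by (simp add: ennreal_lessI)
    also have "\<dots> \<le> lebesgue_num c0_plus sup_dist \<U>" by (rule cov)
    finally have "ennreal t < Sup {ennreal r | r. r \<ge> 0 \<and>
            (\<forall>E. E \<subseteq> (c0_plus :: ('k \<Rightarrow> real) set) \<longrightarrow> set_diam sup_dist E < ennreal r \<longrightarrow> (\<exists>U\<in>\<U>. E \<subseteq> U))}"
      unfolding lebesgue_num_def .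
    then obtain r where r: "r \<ge> 0" "ennreal t < ennreal r"
      and H: "\<forall>E. E \<subseteq> (c0_plus :: ('k \<Rightarrow> real) set) \<longrightarrow> set_diam sup_dist E < ennreal r \<longrightarrow> (\<exists>U\<in>\<U>. E \<subseteq> U)"
      by (auto simp: less_Sup_iff)
    have tr: "t < r" using r t by (simp add: ennreal_less_iff)
    obtain \<xi>0 :: 'k where True by blast
    define z :: "'k \<Rightarrow> real" where "z = (\<lambda>_. 0)"
    define w :: "'k \<Rightarrow> real" where "w = (\<lambda>\<xi>. if \<xi> = \<xi>0 then t else 0)"
    have zX: "z \<in> c0_plus" unfolding c0_plus_def z_def by auto
    have "{\<xi>. \<bar>w \<xi>\<bar> > \<eta>} \<subseteq> {\<xi>0}" if "\<eta> > 0" for \<eta> using that unfolding w_def by auto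
    then have "\<forall>\<eta>>0. finite {\<xi>. \<bar>w \<xi>\<bar> > \<eta>}" by (meson finite.emptyI finite_insert finite_subset)
    moreover have "\<forall>\<xi>. w \<xi> \<ge> 0" using t unfolding w_def by simp
    ultimately have wX: "w \<in> c0_plus" unfolding c0_plus_def by blast
    have dle: "sup_dist p q \<le> t" if "p \<in> {z, w}" "q \<in> {z, w}" for p q
      using that t by (intro sd_le) (auto simp: z_def w_def)
    have "set_diam sup_dist {z, w} \<le> ennreal t"
      by (rule diam_le) (use dle in \<open>auto intro: ennreal_leI\<close>)
    also have "\<dots> < ennreal r" by (rule r(2))
    finally have "set_diam sup_dist {z, w} < ennreal r" .
    moreover have "{z, w} \<subseteq> c0_plus" using zX wX by simp
    ultimately obtain U where U: "U \<in> \<U>" "{z, w} \<subseteq> U" using H[rule_format, of "{z, w}"] by blast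
    have "t \<le> sup_dist z w" using sd_ge[OF zX wX, of \<xi>0] t by (simp add: z_def w_def)
    then have "ennreal t \<le> ennreal (sup_dist z w)" by (rule ennreal_leI)
    also have "\<dots> \<le> set_diam sup_dist U" using U by (intro diam_ge) auto
    also have "\<dots> \<le> cover_diam sup_dist \<U>" unfolding cover_diam_def using U by (intro SUP_upper)
    finally show ?thesis .
  qed
  show ?thesis
  proof (cases "cover_diam sup_dist \<U>")
    case (real c)
    show ?thesis
    proof (rule ccontr)
      assume "\<not> ennreal R \<le> cover_diam sup_dist \<U>"
      then have cR: "c < R" using real by (auto simp: ennreal_le_iff)
      have "ennreal ((c + R)/2) \<le> ennreal c" using key[of "(c+R)/2"] real cR by auto
      then show False using real cR by (simp add: ennreal_le_iff)
    qed
  qed simp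
qed

lemma upper:
  fixes R a :: real
  assumes R: "R \<ge> 0" and a: "a > 0"
  shows "Delta_c (c0_plus :: ('k \<Rightarrow> real) set) sup_dist R \<le> ennreal (R + a)"
proof -
  define X where "X = (c0_plus :: ('k \<Rightarrow> real) set)"
  define Uf where "Uf = (\<lambda>f::'k \<Rightarrow> nat. {x \<in> X. \<forall>\<xi>. real (f \<xi>) * a \<le> x \<xi> \<and> x \<xi> \<le> real (f \<xi>) * a + R + a})"
  define \<U> where "\<U> = range Uf"
  have flo: "real (nat \<lfloor>s / a\<rfloor>) * a \<le> s \<and> s \<le> real (nat \<lfloor>s / a\<rfloor>) * a + a" if "s \<ge> 0" for s
  proof -
    have f0: "\<lfloor>s / a\<rfloor> \<ge> 0" using that a by simp
    have "real_of_int \<lfloor>s / a\<rfloor> \<le> s / a" by simp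
    then have 1: "real_of_int \<lfloor>s / a\<rfloor> * a \<le> s" using a by (metis pos_le_divide_eq)
    have "s / a < real_of_int \<lfloor>s / a\<rfloor> + 1" by simp
    then have 2: "s < (real_of_int \<lfloor>s / a\<rfloor> + 1) * a" using a by (metis pos_divide_less_eq)
    show ?thesis using 1 2 f0 by (simp add: algebra_simps)
  qed
  have nnX: "\<And>x \<xi>. x \<in> X \<Longrightarrow> 0 \<le> x \<xi>" unfolding X_def c0_plus_def by auto
  have cover: "is_cover X \<U>"
    unfolding is_cover_def
  proof (intro conjI)
    show "\<forall>U\<in>\<U>. U \<subseteq> X" unfolding \<U>_def Uf_def by auto
    show "\<Union> \<U> = X"
    proof
      show "\<Union> \<U> \<subseteq> X" unfolding \<U>_def Uf_def by auto
      show "X \<subseteq> \<Union> \<U>"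
      proof
        fix x assume x: "x \<in> X"
        have "x \<in> Uf (\<lambda>\<xi>. nat \<lfloor>x \<xi> / a\<rfloor>)" unfolding Uf_def using x flo[OF nnX[OF x]] R
          by (smt (verit) mem_Collect_eq)
        then show "x \<in> \<Union> \<U>" unfolding \<U>_def by auto
      qed
    qed
  qed
  have pf: "point_finite X \<U>"
    unfolding point_finite_def
  proof
    fix x assume x: "x \<in> X"
    obtain B where B: "\<forall>\<xi>. 0 \<le> x \<xi> \<and> x \<xi> \<le> B" using c0_bdd x unfolding X_def by blast
    define S where "S = {\<xi>. \<bar>x \<xi>\<bar> > a / 2}"
    have "\<forall>\<eta>>0. finite {\<xi>. \<bar>x \<xi>\<bar> > \<eta>}" using x unfolding X_def c0_plus_def by blast
    then have finS: "finite S" unfolding S_def using a by (meson half_gt_zero)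
    define N where "N = nat \<lceil>B / a\<rceil>"
    define F where "F = {f :: 'k \<Rightarrow> nat. \<forall>\<xi>. (\<xi> \<in> S \<longrightarrow> f \<xi> \<in> {..N}) \<and> (\<xi> \<notin> S \<longrightarrow> f \<xi> = 0)}"
    have finF: "finite F" unfolding F_def by (rule finite_set_of_finite_funs) (use finS in auto)
    have "{U \<in> \<U>. x \<in> U} \<subseteq> Uf ` F"
    proof
      fix U assume "U \<in> {U \<in> \<U>. x \<in> U}"
      then obtain f where U: "U = Uf f" and xf: "x \<in> Uf f" unfolding \<U>_def by auto
      have fle: "real (f \<xi>) * a \<le> x \<xi>" for \<xi> using xf unfolding Uf_def by auto
      have "f \<in> F" unfolding F_def mem_Collect_eq
      proof (intro allI conjI impI)
        fix \<xi> assume "\<xi> \<in> S"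
        have "real (f \<xi>) * a \<le> B" using fle[of \<xi>] B by (meson order_trans)
        then have "real (f \<xi>) \<le> B / a" using a by (simp add: pos_le_divide_eq)
        also have "\<dots> \<le> real_of_int \<lceil>B / a\<rceil>" by simp
        finally have "real (f \<xi>) \<le> real_of_int \<lceil>B / a\<rceil>" .
        then have "f \<xi> \<le> N" unfolding N_def by linarith
        then show "f \<xi> \<in> {..N}" by simp
      next
        fix \<xi> assume "\<xi> \<notin> S"
        then have "x \<xi> \<le> a / 2" using B unfolding S_def by auto
        then have "real (f \<xi>) * a < 1 * a" using fle[of \<xi>] a by linarith
        then have "real (f \<xi>) < 1" using a by simp
        then show "f \<xi> = 0" by simp
      qed
      then show "U \<in> Uf ` F" using U by auto
    qed
    then show "finite {U \<in> \<U>. x \<in> U}" using finF by (meson finite_imageI finite_subset)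
  qed
  have leb: "lebesgue_num X sup_dist \<U> \<ge> ennreal R"
    unfolding lebesgue_num_def
  proof (rule Sup_upper, safe intro!: exI[of _ R])
    show "R \<ge> 0" by (rule R)
    fix E assume EX: "E \<subseteq> X" and dE: "set_diam sup_dist E < ennreal R"
    show "\<exists>U\<in>\<U>. E \<subseteq> U"
    proof (cases "E = {}")
      case True then show ?thesis unfolding \<U>_def by auto
    next
      case False
      define s where "s = (\<lambda>\<xi>. Inf ((\<lambda>x. x \<xi>) ` E))"
      have close: "x \<xi> \<le> y \<xi> + R" if "x \<in> E" "y \<in> E" for x y \<xi>
      proof -
        have xX: "x \<in> c0_plus" "y \<in> c0_plus" using that EX unfolding X_def by auto
        have "sup_dist x y < R"
        proof (rule ccontr)
          assume "\<not> sup_dist x y < R"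
          then have "ennreal R \<le> ennreal (sup_dist x y)" by (intro ennreal_leI) simp
          also have "\<dots> \<le> set_diam sup_dist E" using that by (rule diam_ge)
          finally show False using dE by simp
        qed
        then show ?thesis using sd_ge[OF xX, of \<xi>] by linarith
      qed
      have bb: "bdd_below ((\<lambda>x. x \<xi>) ` E)" for \<xi>
        using EX nnX by (intro bdd_belowI[of _ 0]) auto
      have s1: "s \<xi> \<le> x \<xi>" if "x \<in> E" for x \<xi>
        unfolding s_def using that bb by (intro cInf_lower) auto
      have s2: "x \<xi> \<le> s \<xi> + R" if "x \<in> E" for x \<xi>
      proof -
        have "x \<xi> - R \<le> s \<xi>" unfolding s_def
          using False close[OF that] by (intro cInf_greatest) (auto simp: algebra_simps)
        then show ?thesis by simp
      qed
      have s0: "s \<xi> \<ge> 0" for \<xi>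
        unfolding s_def using False EX nnX by (intro cInf_greatest) auto
      define f where "f = (\<lambda>\<xi>. nat \<lfloor>s \<xi> / a\<rfloor>)"
      have "E \<subseteq> Uf f"
      proof
        fix x assume xE: "x \<in> E"
        have "real (f \<xi>) * a \<le> x \<xi> \<and> x \<xi> \<le> real (f \<xi>) * a + R + a" for \<xi>
          using flo[OF s0[of \<xi>]] s1[OF xE, of \<xi>] s2[OF xE, of \<xi>] unfolding f_def by linarith
        then show "x \<in> Uf f" unfolding Uf_def using xE EX by auto
      qed
      then show ?thesis unfolding \<U>_def by auto
    qed
  qed
  have diam: "cover_diam sup_dist \<U> \<le> ennreal (R + a)"
    unfolding cover_diam_def \<U>_def
  proof (rule SUP_least)
    fix U assume "U \<in> range Uf"
    then obtain f where U: "U = Uf f" by auto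
    show "set_diam sup_dist U \<le> ennreal (R + a)"
    proof (rule diam_le)
      fix x y assume "x \<in> U" "y \<in> U"
      then have hx: "real (f \<xi>) * a \<le> x \<xi> \<and> x \<xi> \<le> real (f \<xi>) * a + R + a"
        and hy: "real (f \<xi>) * a \<le> y \<xi> \<and> y \<xi> \<le> real (f \<xi>) * a + R + a" for \<xi>
        unfolding U Uf_def by auto
      have "\<bar>x \<xi> - y \<xi>\<bar> \<le> R + a" for \<xi> using hx[of \<xi>] hy[of \<xi>] by linarith
      then have "sup_dist x y \<le> R + a" by (rule sd_le)
      then show "ennreal (sup_dist x y) \<le> ennreal (R + a)" by (rule ennreal_leI)
    qed
  qed
  have mem: "cover_diam sup_dist \<U> \<in> {cover_diam sup_dist \<U> | \<U>. is_cover X \<U> \<and> point_finite X \<U>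
                                         \<and> lebesgue_num X sup_dist \<U> \<ge> ennreal R}"
    using cover pf leb by blast
  have "Delta_c X sup_dist R \<le> cover_diam sup_dist \<U>" unfolding Delta_c_def by (rule Inf_lower[OF mem])
  from order_trans[OF this diam] show ?thesis by (simp only: X_def)
qed

theorem proposition3p10:
  fixes R :: real
  assumes "R \<ge> 0"
  shows "Delta_c (c0_plus :: ('k \<Rightarrow> real) set) sup_dist R = ennreal R"
proof (rule antisym)
  show "ennreal R \<le> Delta_c (c0_plus :: ('k \<Rightarrow> real) set) sup_dist R"
    unfolding Delta_c_def
  proof (rule Inf_greatest)
    fix y assume "y \<in> {cover_diam sup_dist \<U> | \<U>. is_cover (c0_plus :: ('k \<Rightarrow> real) set) \<U>
       \<and> point_finite (c0_plus :: ('k \<Rightarrow> real) set) \<U>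
       \<and> lebesgue_num (c0_plus :: ('k \<Rightarrow> real) set) sup_dist \<U> \<ge> ennreal R}"
    then obtain \<U> where y: "y = cover_diam sup_dist \<U>"
      and l: "lebesgue_num (c0_plus :: ('k \<Rightarrow> real) set) sup_dist \<U> \<ge> ennreal R" by blast
    show "ennreal R \<le> y" unfolding y by (rule lower[OF assms l])
  qed
  show "Delta_c (c0_plus :: ('k \<Rightarrow> real) set) sup_dist R \<le> ennreal R"
  proof (rule ennreal_le_epsilon)
    fix e :: real assume "ennreal R < top" and e: "0 < e"
    have "Delta_c (c0_plus :: ('k \<Rightarrow> real) set) sup_dist R \<le> ennreal (R + e)" by (rule upper[OF assms e])
    also have "\<dots> = ennreal R + ennreal e" by (rule ennreal_plus[OF assms less_imp_le[OF e]])
    finally show "Delta_c (c0_plus :: ('k \<Rightarrow> real) set) sup_dist R \<le> ennreal R + ennreal e" .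
  qed
qed

end
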